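(* Let $U$ be a commutative supertropical monoid with $M:=eU$. (i) The supertropical monoid $\hat U:=U/E(U,D(U))$ is a semiring. (ii) The ideal compression $\sigma_U:=\pi_{E(U,D(U))}:U\to\hat U$ is universal among all fiber contractions $\alpha:U\to V$ with $V$ a semiring: given such a fiber contraction $\alpha$, there is a unique fiber contraction $\beta:\hat U\to V$ with $\alpha=\beta\circ\sigma_U$ (and if $\alpha$ is a fiber contraction over $M$, so is $\beta$).
   Context: All monoids are commutative. A supertropical monoid is a monoid $(U,\cdot)$ with absorbing element $0$ and distinguished idempotent $e$ with $ex=0\Rightarrow x=0$, together with a total ordering on $M:=eU$, compatible with multiplication and with $0$ least, making $M$ a bipotent semiring (addition $=\max$). Define on $U$: $x+y:=y$ if $ex<ey$, $x$ if $ex>ey$, $ex$ if $ex=ey$; $U$ is a semiring if this addition is associative and distributive. A transmission $\alpha:U\to V$ is a map with $\alpha(0)=0$, $\alpha(1)=1$, multiplicative, $\alpha(e_U)=e_V$, order-preserving on $eU$. A fiber contraction is a surjective transmission whose restriction $eU\to eV$ is an isomorphism; over $M$ if $eV=M$ and that restriction is $\mathrm{id}_M$. An element $x\in U$ is an NC-product if there exist $y,z\in U$ and $y'\in M$ with $x=yz$, $y'<ey$, $y'z=eyz$; $D_0(U)$ is the set of NC-products and $D(U):=D_0(U)\cup M$ (an ideal of $U$ containing $M$). $E(U,D(U))$ is the equivalence relation: $x\sim y$ iff $x=y$, or $x,y\in D(U)$ and $ex=ey$; it is a TE-relation and $U/E(U,D(U))$ carries the unique supertropical monoid structure making the projection $\pi_{E(U,D(U))}$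 a transmission, with ghost ideal identified with $M$. *)

theory Defs
  imports Main
begin

record 'a stm =
  stm_carrier :: "'a set"
  stm_mult    :: "'a \<Rightarrow> 'a \<Rightarrow> 'a"
  stm_one     :: 'a
  stm_zero    :: 'a
  stm_e       :: 'a
  stm_le      :: "'a \<Rightarrow> 'a \<Rightarrow> bool"  \<comment> \<open>total order on the ghost ideal M = eU\<close>

definition ghosts :: "('a, 'm) stm_scheme \<Rightarrow> 'a set" where
  "ghosts U = (\<lambda>x. stm_mult U (stm_e U) x) ` stm_carrier U"

definition stm_lt :: "('a, 'm) stm_scheme \<Rightarrow> 'a \<Rightarrow> 'a \<Rightarrow> bool" where
  "stm_lt U x y \<longleftrightarrow> stm_le U x y \<and> x \<noteq> y"

definition supertropical_monoid :: "('a, 'm) stm_scheme \<Rightarrow> bool" where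
  "supertropical_monoid U \<longleftrightarrow>
     (let C = stm_carrier U; mul = stm_mult U; e = stm_e U; M = ghosts U; le = stm_le U in
      \<comment> \<open>commutative monoid\<close>
      (\<forall>x\<in>C. \<forall>y\<in>C. mul x y \<in> C) \<and>
      (\<forall>x\<in>C. \<forall>y\<in>C. \<forall>z\<in>C. mul (mul x y) z = mul x (mul y z)) \<and>
      (\<forall>x\<in>C. \<forall>y\<in>C. mul x y = mul y x) \<and>
      stm_one U \<in> C \<and> (\<forall>x\<in>C. mul (stm_one U) x = x) \<and>
      \<comment> \<open>absorbing zero\<close>
      stm_zero U \<in> C \<and> (\<forall>x\<in>C. mul (stm_zero U) x = stm_zero U) \<and>
      \<comment> \<open>distinguished idempotent e with ex = 0 implies x = 0\<close>
      e \<in> C \<and> mul e e = e \<and> (\<forall>x\<in>C. mul e x = stm_zero U \<longrightarrow> x = stm_zero U) \<and>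
      \<comment> \<open>total ordering on M, compatible with multiplication, 0 least\<close>
      (\<forall>x\<in>M. le x x) \<and>
      (\<forall>x\<in>M. \<forall>y\<in>M. le x y \<and> le y x \<longrightarrow> x = y) \<and>
      (\<forall>x\<in>M. \<forall>y\<in>M. \<forall>z\<in>M. le x y \<and> le y z \<longrightarrow> le x z) \<and>
      (\<forall>x\<in>M. \<forall>y\<in>M. le x y \<or> le y x) \<and>
      (\<forall>x\<in>M. \<forall>y\<in>M. \<forall>z\<in>M. le x y \<longrightarrow> le (mul x z) (mul y z)) \<and>
      (\<forall>x\<in>M. le (stm_zero U) x))"

definition stm_add :: "('a, 'm) stm_scheme \<Rightarrow> 'a \<Rightarrow> 'a \<Rightarrow> 'a" where
  "stm_add U x y =
     (let ex = stm_mult U (stm_e U) x; ey = stm_mult U (stm_e U) y in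
      if stm_lt U ex ey then y else if stm_lt U ey ex then x else ex)"

definition stm_semiring :: "('a, 'm) stm_scheme \<Rightarrow> bool" where
  "stm_semiring U \<longleftrightarrow> supertropical_monoid U \<and>
     (\<forall>x\<in>stm_carrier U. \<forall>y\<in>stm_carrier U. \<forall>z\<in>stm_carrier U.
        stm_add U (stm_add U x y) z = stm_add U x (stm_add U y z)) \<and>
     (\<forall>x\<in>stm_carrier U. \<forall>y\<in>stm_carrier U. \<forall>z\<in>stm_carrier U.
        stm_mult U x (stm_add U y z) = stm_add U (stm_mult U x y) (stm_mult U x z))"

definition transmission ::
  "('a, 'm) stm_scheme \<Rightarrow> ('b, 'n) stm_scheme \<Rightarrow> ('a \<Rightarrow> 'b) \<Rightarrow> bool" where
  "transmission U V \<alpha> \<longleftrightarrow>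
     (\<forall>x\<in>stm_carrier U. \<alpha> x \<in> stm_carrier V) \<and>
     \<alpha> (stm_zero U) = stm_zero V \<and> \<alpha> (stm_one U) = stm_one V \<and>
     (\<forall>x\<in>stm_carrier U. \<forall>y\<in>stm_carrier U. \<alpha> (stm_mult U x y) = stm_mult V (\<alpha> x) (\<alpha> y)) \<and>
     \<alpha> (stm_e U) = stm_e V \<and>
     (\<forall>x\<in>ghosts U. \<forall>y\<in>ghosts U. stm_le U x y \<longrightarrow> stm_le V (\<alpha> x) (\<alpha> y))"

definition fiber_contraction ::
  "('a, 'm) stm_scheme \<Rightarrow> ('b, 'n) stm_scheme \<Rightarrow> ('a \<Rightarrow> 'b) \<Rightarrow> bool" where
  "fiber_contraction U V \<alpha> \<longleftrightarrow>
     transmission U V \<alpha> \<and> \<alpha> ` stm_carrier U = stm_carrier V \<and>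
     bij_betw \<alpha> (ghosts U) (ghosts V) \<and>
     (\<forall>x\<in>ghosts U. \<forall>y\<in>ghosts U. stm_le V (\<alpha> x) (\<alpha> y) \<longleftrightarrow> stm_le U x y)"

definition fiber_contraction_over ::
  "('a, 'm) stm_scheme \<Rightarrow> ('a, 'n) stm_scheme \<Rightarrow> ('a \<Rightarrow> 'a) \<Rightarrow> bool" where
  "fiber_contraction_over U V \<alpha> \<longleftrightarrow>
     fiber_contraction U V \<alpha> \<and> ghosts V = ghosts U \<and> (\<forall>x\<in>ghosts U. \<alpha> x = x)"

definition NC_product :: "('a, 'm) stm_scheme \<Rightarrow> 'a \<Rightarrow> bool" where
  "NC_product U x \<longleftrightarrow>
     (\<exists>y\<in>stm_carrier U. \<exists>z\<in>stm_carrier U. \<exists>y'\<in>ghosts U.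
        x = stm_mult U y z \<and> stm_lt U y' (stm_mult U (stm_e U) y) \<and>
        stm_mult U y' z = stm_mult U (stm_e U) (stm_mult U y z))"

definition D0 :: "('a, 'm) stm_scheme \<Rightarrow> 'a set" where
  "D0 U = {x \<in> stm_carrier U. NC_product U x}"

definition DD :: "('a, 'm) stm_scheme \<Rightarrow> 'a set" where
  "DD U = D0 U \<union> ghosts U"

definition E_rel :: "('a, 'm) stm_scheme \<Rightarrow> 'a set \<Rightarrow> ('a \<times> 'a) set" where
  "E_rel U D = {(x, y). x \<in> stm_carrier U \<and> y \<in> stm_carrier U \<and>
      (x = y \<or> (x \<in> D \<and> y \<in> D \<and> stm_mult U (stm_e U) x = stm_mult U (stm_e U) y))}"

definition EU :: "('a, 'm) stm_scheme \<Rightarrow> ('a \<times> 'a) set" where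
  "EU U = E_rel U (DD U)"

definition sigma :: "('a, 'm) stm_scheme \<Rightarrow> 'a \<Rightarrow> 'a set" where
  "sigma U x = EU U `` {x}"

definition qrep :: "'a set \<Rightarrow> 'a" where
  "qrep X = (SOME x. x \<in> X)"

text \<open>The quotient supertropical monoid U/E(U,D(U)): the unique structure making
  the projection a transmission (multiplication of representatives, ordering of ghost
  classes induced from M via e).\<close>
definition quot :: "('a, 'm) stm_scheme \<Rightarrow> 'a set stm" where
  "quot U = \<lparr> stm_carrier = stm_carrier U // EU U,
              stm_mult = (\<lambda>X Y. sigma U (stm_mult U (qrep X) (qrep Y))),
              stm_one = sigma U (stm_one U),
              stm_zero = sigma U (stm_zero U),
              stm_e = sigma U (stm_e U),
              stm_le = (\<lambda>X Y. stm_le U (stm_mult U (stm_e U) (qrep X))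
                                       (stm_mult U (stm_e U) (qrep Y))) \<rparr>"

end

theory Submission
  imports Defs
begin

locale stmon =
  fixes U :: "('a,'m) stm_scheme"
  assumes sm: "supertropical_monoid U"
begin

abbreviation "C \<equiv> stm_carrier U"
abbreviation "mul \<equiv> stm_mult U"
abbreviation "e \<equiv> stm_e U"
abbreviation "M \<equiv> ghosts U"
abbreviation "le \<equiv> stm_le U"
abbreviation "lt \<equiv> stm_lt U"
abbreviation "add \<equiv> stm_add U"
abbreviation "z0 \<equiv> stm_zero U"
abbreviation "o1 \<equiv> stm_one U"

lemmas S = sm[unfolded supertropical_monoid_def Let_def]
lemmas closed0 = S[THEN conjunct1]
lemmas assoc0 = S[THEN conjunct2, THEN conjunct1]
lemmas comm0 = S[THEN conjunct2, THEN conjunct2, THEN conjunct1]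
lemmas one0 = S[THEN conjunct2, THEN conjunct2, THEN conjunct2, THEN conjunct1]
lemmas onel0 = S[THEN conjunct2, THEN conjunct2, THEN conjunct2, THEN conjunct2, THEN conjunct1]
lemmas zero0 = S[THEN conjunct2, THEN conjunct2, THEN conjunct2, THEN conjunct2, THEN conjunct2, THEN conjunct1]
lemmas zerol0 = S[THEN conjunct2, THEN conjunct2, THEN conjunct2, THEN conjunct2, THEN conjunct2, THEN conjunct2, THEN conjunct1]
lemmas eC0 = S[THEN conjunct2, THEN conjunct2, THEN conjunct2, THEN conjunct2, THEN conjunct2, THEN conjunct2, THEN conjunct2, THEN conjunct1]
lemmas ee0 = S[THEN conjunct2, THEN conjunct2, THEN conjunct2, THEN conjunct2, THEN conjunct2, THEN conjunct2, THEN conjunct2, THEN conjunct2, THEN conjunct1]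
lemmas enz0 = S[THEN conjunct2, THEN conjunct2, THEN conjunct2, THEN conjunct2, THEN conjunct2, THEN conjunct2, THEN conjunct2, THEN conjunct2, THEN conjunct2, THEN conjunct1]
lemmas refl0 = S[THEN conjunct2, THEN conjunct2, THEN conjunct2, THEN conjunct2, THEN conjunct2, THEN conjunct2, THEN conjunct2, THEN conjunct2, THEN conjunct2, THEN conjunct2, THEN conjunct1]
lemmas antisym0 = S[THEN conjunct2, THEN conjunct2, THEN conjunct2, THEN conjunct2, THEN conjunct2, THEN conjunct2, THEN conjunct2, THEN conjunct2, THEN conjunct2, THEN conjunct2, THEN conjunct2, THEN conjunct1]
lemmas trans0 = S[THEN conjunct2, THEN conjunct2, THEN conjunct2, THEN conjunct2, THEN conjunct2, THEN conjunct2, THEN conjunct2, THEN conjunct2, THEN conjunct2, THEN conjunct2, THEN conjunct2, THEN conjunct2, THEN conjunct1]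
lemmas total0 = S[THEN conjunct2, THEN conjunct2, THEN conjunct2, THEN conjunct2, THEN conjunct2, THEN conjunct2, THEN conjunct2, THEN conjunct2, THEN conjunct2, THEN conjunct2, THEN conjunct2, THEN conjunct2, THEN conjunct2, THEN conjunct1]
lemmas mono0 = S[THEN conjunct2, THEN conjunct2, THEN conjunct2, THEN conjunct2, THEN conjunct2, THEN conjunct2, THEN conjunct2, THEN conjunct2, THEN conjunct2, THEN conjunct2, THEN conjunct2, THEN conjunct2, THEN conjunct2, THEN conjunct2, THEN conjunct1]
lemmas lezero0 = S[THEN conjunct2, THEN conjunct2, THEN conjunct2, THEN conjunct2, THEN conjunct2, THEN conjunct2, THEN conjunct2, THEN conjunct2, THEN conjunct2, THEN conjunct2, THEN conjunct2, THEN conjunct2, THEN conjunct2, THEN conjunct2, THEN conjunct2]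

lemma closed: "x \<in> C \<Longrightarrow> y \<in> C \<Longrightarrow> mul x y \<in> C" using closed0 by blast
lemma assoc: "x \<in> C \<Longrightarrow> y \<in> C \<Longrightarrow> z \<in> C \<Longrightarrow> mul (mul x y) z = mul x (mul y z)" using assoc0 by blast
lemma comm: "x \<in> C \<Longrightarrow> y \<in> C \<Longrightarrow> mul x y = mul y x" using comm0 by blast
lemma one: "o1 \<in> C" "x \<in> C \<Longrightarrow> mul o1 x = x" using one0 onel0 by blast+
lemma zero: "z0 \<in> C" "x \<in> C \<Longrightarrow> mul z0 x = z0" using zero0 zerol0 by blast+
lemma eC: "e \<in> C" and ee: "mul e e = e" and enz: "x \<in> C \<Longrightarrow> mul e x = z0 \<Longrightarrow> x = z0"
  using eC0 ee0 enz0 by blast+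
lemma le_refl: "x \<in> M \<Longrightarrow> le x x" using refl0 by blast
lemma le_antisym: "x \<in> M \<Longrightarrow> y \<in> M \<Longrightarrow> le x y \<Longrightarrow> le y x \<Longrightarrow> x = y" using antisym0 by blast
lemma le_trans: "x \<in> M \<Longrightarrow> y \<in> M \<Longrightarrow> z \<in> M \<Longrightarrow> le x y \<Longrightarrow> le y z \<Longrightarrow> le x z" using trans0 by blast
lemma le_total: "x \<in> M \<Longrightarrow> y \<in> M \<Longrightarrow> le x y \<or> le y x" using total0 by blast
lemma le_mono: "x \<in> M \<Longrightarrow> y \<in> M \<Longrightarrow> z \<in> M \<Longrightarrow> le x y \<Longrightarrow> le (mul x z) (mul y z)" using mono0 by blast
lemma le_zero: "x \<in> M \<Longrightarrow> le z0 x" using lezero0 by blast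

lemma M_iff: "x \<in> M \<longleftrightarrow> x \<in> C \<and> mul e x = x"
proof
  assume "x \<in> M" then obtain w where w: "w \<in> C" "x = mul e w" by (auto simp: ghosts_def)
  then show "x \<in> C \<and> mul e x = x" using eC ee closed assoc[of e e w] by simp
next
  assume "x \<in> C \<and> mul e x = x" then show "x \<in> M" unfolding ghosts_def by force
qed

lemma eM: "x \<in> C \<Longrightarrow> mul e x \<in> M"
  by (simp add: ghosts_def)

lemma ee_x: "x \<in> C \<Longrightarrow> mul e (mul e x) = mul e x"
  using eM M_iff by blast

lemma e_mul: "x \<in> C \<Longrightarrow> y \<in> C \<Longrightarrow> mul e (mul x y) = mul (mul e x) (mul e y)"
proof -
  assume x: "x \<in> C" and y: "y \<in> C"
  have "mul (mul e x) (mul e y) = mul e (mul x (mul e y))" using assoc eC x y closed by simp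
  also have "mul x (mul e y) = mul e (mul x y)"
    using assoc[of x e y] assoc[of e x y] comm[of x e] x y eC by simp
  also have "mul e (mul e (mul x y)) = mul e (mul x y)" using ee_x closed x y by simp
  finally show ?thesis by simp
qed

lemma e_mul2: "x \<in> C \<Longrightarrow> y \<in> C \<Longrightarrow> mul e (mul x y) = mul (mul e x) y"
  using assoc[of e x y] eC by simp

lemma ez: "mul e z0 = z0"
  using zero comm eC by metis

lemma zM: "z0 \<in> M" using M_iff ez zero by simp

lemma lt_irrefl: "\<not> lt x x" by (simp add: stm_lt_def)
lemma lt_asym: "x \<in> M \<Longrightarrow> y \<in> M \<Longrightarrow> lt x y \<Longrightarrow> \<not> lt y x"
  using le_antisym by (auto simp: stm_lt_def)
lemma lt_trans: "x \<in> M \<Longrightarrow> y \<in> M \<Longrightarrow> z \<in> M \<Longrightarrow> lt x y \<Longrightarrow> lt y z \<Longrightarrow> lt x z"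
proof -
  assume a: "x \<in> M" "y \<in> M" "z \<in> M" "lt x y" "lt y z"
  then have l: "le x y" "x \<noteq> y" "le y z" "y \<noteq> z" by (auto simp: stm_lt_def)
  have "le x z" using le_trans[OF a(1-3) l(1) l(3)] .
  moreover have "x \<noteq> z" using le_antisym[OF a(1,2) l(1)] l a(1) by blast
  ultimately show ?thesis by (simp add: stm_lt_def)
qed
lemma trich: "x \<in> M \<Longrightarrow> y \<in> M \<Longrightarrow> lt x y \<or> lt y x \<or> x = y"
  using le_total by (auto simp: stm_lt_def)

lemma add_cases: assumes "x \<in> C" "y \<in> C"
  shows "(lt (mul e x) (mul e y) \<and> add x y = y) \<or> (lt (mul e y) (mul e x) \<and> add x y = x)
    \<or> (mul e x = mul e y \<and> add x y = mul e x)"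
  using trich[OF eM eM, OF assms] lt_asym[OF eM eM, OF assms] unfolding stm_add_def Let_def
  by auto

lemma add_C: "x \<in> C \<Longrightarrow> y \<in> C \<Longrightarrow> add x y \<in> C"
  using add_cases[of x y] closed eC by auto

lemma add_lt: "x \<in> C \<Longrightarrow> y \<in> C \<Longrightarrow> lt (mul e x) (mul e y) \<Longrightarrow> add x y = y"
  by (simp add: stm_add_def)
lemma add_gt: "x \<in> C \<Longrightarrow> y \<in> C \<Longrightarrow> lt (mul e y) (mul e x) \<Longrightarrow> add x y = x"
  using lt_asym[OF eM eM, of y x] by (simp add: stm_add_def)
lemma add_eq: "mul e x = mul e y \<Longrightarrow> add x y = mul e x"
  by (simp add: stm_add_def lt_irrefl)

lemma e_add: assumes "x \<in> C" "y \<in> C"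
  shows "mul e (add x y) \<in> M \<and> le (mul e x) (mul e (add x y)) \<and> le (mul e y) (mul e (add x y))"
  using add_cases[OF assms] ee_x[OF assms(1)] eM[OF assms(1)] eM[OF assms(2)] le_refl
  unfolding stm_lt_def by auto

lemma lt_le_trans: "a \<in> M \<Longrightarrow> b \<in> M \<Longrightarrow> c \<in> M \<Longrightarrow> lt a b \<Longrightarrow> le b c \<Longrightarrow> lt a c"
  unfolding stm_lt_def using le_trans le_antisym by blast

lemma add_assoc: assumes x: "x \<in> C" and y: "y \<in> C" and z: "z \<in> C"
  shows "add (add x y) z = add x (add y z)"
proof -
  have X: "mul e x \<in> M" and Y: "mul e y \<in> M" and Z: "mul e z \<in> M" using eM x y z by auto
  have ex: "mul e (mul e x) = mul e x" "mul e (mul e y) = mul e y" "mul e (mul e z) = mul e z"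
    using ee_x x y z by auto
  have exC: "mul e x \<in> C" "mul e y \<in> C" "mul e z \<in> C" using closed eC x y z by auto
  have yz: "add y z \<in> C" using add_C y z by auto
  consider (1) "lt (mul e x) (mul e y)" | (2) "lt (mul e y) (mul e x)" | (3) "mul e x = mul e y"
    using trich[OF X Y] by blast
  then show ?thesis
  proof cases
    case 1
    have "lt (mul e x) (mul e (add y z))" using lt_le_trans[OF X Y _ 1] e_add[OF y z] by blast
    then show ?thesis using add_lt[OF x y 1] add_lt[OF x yz] by simp
  next
    case 2
    consider (a) "lt (mul e y) (mul e z)" | (b) "lt (mul e z) (mul e y)" | (c) "mul e y = mul e z"
      using trich[OF Y Z] by blast
    then show ?thesis
    proof cases
      case a then show ?thesis using add_gt[OF x y 2] add_lt[OF y z] by simp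
    next
      case b
      have "lt (mul e z) (mul e x)" using lt_trans[OF Z Y X b 2] .
      then show ?thesis using add_gt[OF x y 2] add_gt[OF y z b] add_gt[OF x z] by simp
    next
      case c
      have "lt (mul e z) (mul e x)" using 2 c by simp
      then show ?thesis using add_gt[OF x y 2] add_eq[OF c] add_gt[OF x z] add_gt[OF x exC(2)] 2 ex
        by simp
    qed
  next
    case 3
    consider (a) "lt (mul e y) (mul e z)" | (b) "lt (mul e z) (mul e y)" | (c) "mul e y = mul e z"
      using trich[OF Y Z] by blast
    then show ?thesis
    proof cases
      case a then show ?thesis using add_eq[OF 3] add_lt[OF y z] add_lt[OF exC(1) z] add_lt[OF x z] 3 ex
        by simp
    next
      case b then show ?thesis using add_eq[OF 3] add_gt[OF y z] add_gt[OF exC(1) z] 3 ex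
        by (simp add: add_eq)
    next
      case c then show ?thesis using add_eq[OF 3] add_eq[OF c] 3 ex by (simp add: add_eq)
    qed
  qed
qed

lemma add_comm: assumes x: "x \<in> C" and y: "y \<in> C" shows "add x y = add y x"
proof -
  consider (1) "lt (mul e x) (mul e y)" | (2) "lt (mul e y) (mul e x)" | (3) "mul e x = mul e y"
    using trich[OF eM eM, OF x y] by blast
  then show ?thesis
  proof cases
    case 1 then show ?thesis using add_lt[OF x y 1] add_gt[OF y x 1] by simp
  next
    case 2 then show ?thesis using add_lt[OF y x 2] add_gt[OF x y 2] by simp
  next
    case 3 then show ?thesis using add_eq[OF 3] add_eq[OF 3[symmetric]] by simp
  qed
qed

lemma x_ey: "x \<in> C \<Longrightarrow> y \<in> C \<Longrightarrow> mul x (mul e y) = mul e (mul x y)"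
  using assoc[of x e y] assoc[of e x y] comm[of x e] eC by simp

lemma exy_le: assumes x: "x \<in> C" and y: "y \<in> C" and z: "z \<in> C"
  and l: "le (mul e y) (mul e z)"
  shows "le (mul e (mul x y)) (mul e (mul x z))"
proof -
  have "le (mul (mul e y) (mul e x)) (mul (mul e z) (mul e x))"
    using le_mono[OF eM[OF y] eM[OF z] eM[OF x] l] .
  moreover have "mul (mul e y) (mul e x) = mul e (mul x y)" "mul (mul e z) (mul e x) = mul e (mul x z)"
    using e_mul[OF x y] e_mul[OF x z] comm[OF closed[OF eC y] closed[OF eC x]] comm[OF closed[OF eC z] closed[OF eC x]]
    by simp_all
  ultimately show ?thesis by simp
qed

lemma distrib_case: assumes x: "x \<in> C" and y: "y \<in> C" and z: "z \<in> C"
  and l: "lt (mul e y) (mul e z)"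
  and cond: "mul e (mul x y) = mul e (mul x z) \<Longrightarrow> mul x z = mul e (mul x z)"
  shows "mul x (add y z) = add (mul x y) (mul x z)"
proof -
  have le: "le (mul e (mul x y)) (mul e (mul x z))"
    using exy_le[OF x y z] l by (simp add: stm_lt_def)
  show ?thesis
  proof (cases "mul e (mul x y) = mul e (mul x z)")
    case True
    have "mul x (add y z) = mul x z" using add_lt[OF y z l] by simp
    also have "\<dots> = mul e (mul x z)" by (rule cond[OF True])
    also have "\<dots> = mul e (mul x y)" using True by simp
    also have "\<dots> = add (mul x y) (mul x z)" using add_eq[OF True] by simp
    finally show ?thesis .
  next
    case False
    then have "lt (mul e (mul x y)) (mul e (mul x z))" using le by (simp add: stm_lt_def)
    then show ?thesis using add_lt[OF y z l] add_lt[OF closed[OF x y] closed[OF x z]] by simp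
  qed
qed

lemma semiring_if:
  assumes cond: "\<And>x y z. x \<in> C \<Longrightarrow> y \<in> C \<Longrightarrow> z \<in> C \<Longrightarrow> lt (mul e y) (mul e z)
     \<Longrightarrow> mul e (mul x y) = mul e (mul x z) \<Longrightarrow> mul x z = mul e (mul x z)"
  shows "stm_semiring U"
  unfolding stm_semiring_def
proof (intro conjI ballI)
  show "supertropical_monoid U" by (rule sm)
next
  fix x y z assume "x \<in> C" "y \<in> C" "z \<in> C"
  then show "add (add x y) z = add x (add y z)" by (rule add_assoc)
next
  fix x y z assume x: "x \<in> C" and y: "y \<in> C" and z: "z \<in> C"
  consider (1) "lt (mul e y) (mul e z)" | (2) "lt (mul e z) (mul e y)" | (3) "mul e y = mul e z"
    using trich[OF eM eM, OF y z] by blast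
  then show "mul x (add y z) = add (mul x y) (mul x z)"
  proof cases
    case 1 show ?thesis by (rule distrib_case[OF x y z 1 cond[OF x y z 1]])
  next
    case 2
    have "mul x (add z y) = add (mul x z) (mul x y)"
      by (rule distrib_case[OF x z y 2 cond[OF x z y 2]])
    moreover have "add z y = add y z" by (rule add_comm[OF z y])
    moreover have "add (mul x z) (mul x y) = add (mul x y) (mul x z)"
      using closed x y z by (intro add_comm)
    ultimately show ?thesis by (simp only:)
  next
    case 3
    have q: "mul e (mul x y) = mul e (mul x z)"
      using e_mul[OF x y] e_mul[OF x z] 3 by simp
    show ?thesis by (simp only: add_eq[OF 3] add_eq[OF q] x_ey[OF x y])
  qed
qed

abbreviation "D \<equiv> DD U"
abbreviation "E \<equiv> EU U"
abbreviation "sg \<equiv> sigma U"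
abbreviation "Q \<equiv> quot U"

lemma M_C: "x \<in> M \<Longrightarrow> x \<in> C" using M_iff by blast
lemma D_C: "x \<in> D \<Longrightarrow> x \<in> C" using M_C by (auto simp: DD_def D0_def)
lemma M_D: "x \<in> M \<Longrightarrow> x \<in> D" by (simp add: DD_def)

lemma D_ideal: assumes x: "x \<in> D" and w: "w \<in> C" shows "mul x w \<in> D"
proof (cases "x \<in> M")
  case True
  have xC: "x \<in> C" using M_C True by blast
  have "mul e (mul x w) = mul (mul e x) w" using e_mul2 xC w by simp
  also have "\<dots> = mul x w" using True M_iff by simp
  finally show ?thesis using M_iff closed xC w M_D by simp
next
  case False
  then have "x \<in> D0 U" using x by (simp add: DD_def)
  then obtain y z y' where yz: "y \<in> C" "z \<in> C" "y' \<in> M" "x = mul y z" "lt y' (mul e y)"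
    "mul y' z = mul e (mul y z)" by (auto simp: D0_def NC_product_def)
  have y'C: "y' \<in> C" using M_C yz by blast
  have "mul x w = mul y (mul z w)" using assoc yz w by simp
  moreover have "mul y' (mul z w) = mul e (mul y (mul z w))"
  proof -
    have "mul y' (mul z w) = mul (mul y' z) w" by (rule assoc[OF y'C yz(2) w, symmetric])
    also have "\<dots> = mul (mul e (mul y z)) w" using yz(6) by simp
    also have "\<dots> = mul e (mul (mul y z) w)" using assoc eC closed yz w by simp
    also have "\<dots> = mul e (mul y (mul z w))" using assoc yz w by simp
    finally show ?thesis .
  qed
  ultimately have "NC_product U (mul x w)"
    unfolding NC_product_def using yz(1,3,5) closed[OF yz(2) w] by blast
  then show ?thesis using closed[OF D_C[OF x] w] by (simp add: DD_def D0_def)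
qed

lemma E_iff: "(x, y) \<in> E \<longleftrightarrow> x \<in> C \<and> y \<in> C \<and> (x = y \<or> x \<in> D \<and> y \<in> D \<and> mul e x = mul e y)"
  by (simp add: EU_def E_rel_def)

lemma equivE: "equiv C E"
  unfolding equiv_def refl_on_def sym_def trans_def
  by (auto simp: E_iff EU_def E_rel_def)

lemma E_e: "(x, y) \<in> E \<Longrightarrow> mul e x = mul e y" by (auto simp: E_iff)

lemma E_trans: "(x, y) \<in> E \<Longrightarrow> (y, z) \<in> E \<Longrightarrow> (x, z) \<in> E"
  using equivE unfolding equiv_def trans_def by blast
lemma E_sym: "(x, y) \<in> E \<Longrightarrow> (y, x) \<in> E"
  using equivE unfolding equiv_def sym_def by blast
lemma E_refl: "x \<in> C \<Longrightarrow> (x, x) \<in> E" by (simp add: E_iff)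

lemma E_cong: assumes xy: "(x, y) \<in> E" and w: "w \<in> C" shows "(mul x w, mul y w) \<in> E"
proof -
  have xC: "x \<in> C" and yC: "y \<in> C" using xy by (auto simp: E_iff)
  show ?thesis
  proof (cases "x = y")
    case True then show ?thesis using E_refl closed yC w by simp
  next
    case False
    then have d: "x \<in> D" "y \<in> D" "mul e x = mul e y" using xy by (auto simp: E_iff)
    have "mul e (mul x w) = mul e (mul y w)" using e_mul2 xC yC w d(3) by simp
    then show ?thesis using D_ideal d w closed xC yC by (simp add: E_iff)
  qed
qed

lemma E_cong2: assumes "(x, x') \<in> E" "(y, y') \<in> E" shows "(mul x y, mul x' y') \<in> E"
proof -
  have C: "x \<in> C" "x' \<in> C" "y \<in> C" "y' \<in> C" using assms by (auto simp: E_iff)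
  have "(mul x y, mul x' y) \<in> E" using E_cong assms C by blast
  moreover have "(mul y x', mul y' x') \<in> E" using E_cong assms C by blast
  then have "(mul x' y, mul x' y') \<in> E" using comm C by simp
  ultimately show ?thesis using E_trans by blast
qed

lemma sg_eq: "x \<in> C \<Longrightarrow> y \<in> C \<Longrightarrow> sg x = sg y \<longleftrightarrow> (x, y) \<in> E"
  using equiv_class_eq_iff[OF equivE] by (simp add: sigma_def)

lemma sg_self: "x \<in> C \<Longrightarrow> x \<in> sg x"
  using equiv_class_self[OF equivE] by (simp add: sigma_def)

lemma qrep_E: assumes "x \<in> C" shows "(qrep (sg x), x) \<in> E"
proof -
  have "qrep (sg x) \<in> sg x" unfolding qrep_def using sg_self[OF assms] by (rule someI)
  then show ?thesis by (simp add: sigma_def E_sym)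
qed

lemma qrep_C: "x \<in> C \<Longrightarrow> qrep (sg x) \<in> C" using qrep_E by (auto simp: E_iff)

lemma carQ: "stm_carrier Q = sg ` C"
  by (auto simp: quot_def quotient_def sigma_def)

lemma mulQ: assumes "x \<in> C" "y \<in> C" shows "stm_mult Q (sg x) (sg y) = sg (mul x y)"
proof -
  have "(mul (qrep (sg x)) (qrep (sg y)), mul x y) \<in> E" using E_cong2 qrep_E assms by blast
  then show ?thesis using sg_eq closed qrep_C assms by (simp add: quot_def)
qed

lemma e_qrep: "x \<in> C \<Longrightarrow> mul e (qrep (sg x)) = mul e x" using E_e qrep_E by blast

lemma leQ: "x \<in> C \<Longrightarrow> y \<in> C \<Longrightarrow> stm_le Q (sg x) (sg y) \<longleftrightarrow> le (mul e x) (mul e y)"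
  by (simp add: quot_def e_qrep)

lemma oneQ: "stm_one Q = sg o1" and zeroQ: "stm_zero Q = sg z0" and eQ: "stm_e Q = sg e"
  by (simp_all add: quot_def)

lemma ghostsQ: "ghosts Q = sg ` M"
proof -
  have "ghosts Q = (\<lambda>X. stm_mult Q (sg e) X) ` (sg ` C)" by (simp add: ghosts_def carQ eQ)
  also have "\<dots> = (\<lambda>x. sg (mul e x)) ` C" using mulQ eC by (auto simp: image_iff)
  also have "\<dots> = sg ` M" by (auto simp: ghosts_def)
  finally show ?thesis .
qed

lemma sg_inj_M: "g \<in> M \<Longrightarrow> h \<in> M \<Longrightarrow> sg g = sg h \<Longrightarrow> g = h"
  using sg_eq M_C E_e M_iff by metis

lemma ball_sg: "(\<forall>X\<in>sg ` A. P X) \<longleftrightarrow> (\<forall>x\<in>A. P (sg x))" by blast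

lemma M_mul: assumes "g \<in> M" "w \<in> C" shows "mul g w \<in> M"
proof -
  have gC: "g \<in> C" using M_C assms by blast
  have "mul e (mul g w) = mul (mul e g) w" using e_mul2 gC assms by simp
  also have "\<dots> = mul g w" using assms M_iff by simp
  finally show ?thesis using M_iff closed[OF gC assms(2)] by simp
qed

lemma leQM: "g \<in> M \<Longrightarrow> h \<in> M \<Longrightarrow> stm_le Q (sg g) (sg h) \<longleftrightarrow> le g h"
  using leQ M_C M_iff by metis

lemma Q_sm: "supertropical_monoid Q"
  unfolding supertropical_monoid_def Let_def carQ ghostsQ ball_sg oneQ zeroQ eQ
proof (intro conjI ballI)
  fix x y assume x: "x \<in> C" and y: "y \<in> C"
  show "stm_mult Q (sg x) (sg y) \<in> sg ` C" using mulQ[OF x y] closed[OF x y] by simp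
  show "stm_mult Q (sg x) (sg y) = stm_mult Q (sg y) (sg x)" using mulQ x y comm[OF x y] by simp
  fix z assume z: "z \<in> C"
  show "stm_mult Q (stm_mult Q (sg x) (sg y)) (sg z) = stm_mult Q (sg x) (stm_mult Q (sg y) (sg z))"
    using mulQ[OF x y] mulQ[OF y z] mulQ[OF closed[OF x y] z] mulQ[OF x closed[OF y z]] assoc[OF x y z]
    by simp
next
  fix x assume x: "x \<in> C"
  show "stm_mult Q (sg o1) (sg x) = sg x" using mulQ[OF one(1) x] one(2)[OF x] by simp
  show "stm_mult Q (sg z0) (sg x) = sg z0" using mulQ[OF zero(1) x] zero(2)[OF x] by simp
  show "stm_mult Q (sg e) (sg x) = sg z0 \<longrightarrow> sg x = sg z0"
  proof
    assume "stm_mult Q (sg e) (sg x) = sg z0"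
    then have "sg (mul e x) = sg z0" using mulQ[OF eC x] by simp
    then have "(mul e x, z0) \<in> E" using sg_eq closed[OF eC x] zero(1) by blast
    then have "mul e (mul e x) = mul e z0" by (rule E_e)
    then have "mul e x = z0" using ee_x[OF x] ez by simp
    then show "sg x = sg z0" using enz[OF x] by simp
  qed
next
  show "sg o1 \<in> sg ` C" "sg z0 \<in> sg ` C" "sg e \<in> sg ` C" using one zero eC by auto
  show "stm_mult Q (sg e) (sg e) = sg e" using mulQ[OF eC eC] ee by simp
next
  fix x assume x: "x \<in> M"
  show "stm_le Q (sg x) (sg x)" using leQM[OF x x] le_refl[OF x] by simp
  show "stm_le Q (sg z0) (sg x)" using leQM[OF zM x] le_zero[OF x] by simp
  fix y assume y: "y \<in> M"
  show "stm_le Q (sg x) (sg y) \<and> stm_le Q (sg y) (sg x) \<longrightarrow> sg x = sg y"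
    using leQM[OF x y] leQM[OF y x] le_antisym[OF x y] by auto
  show "stm_le Q (sg x) (sg y) \<or> stm_le Q (sg y) (sg x)"
    using leQM[OF x y] leQM[OF y x] le_total[OF x y] by auto
  fix z assume z: "z \<in> M"
  show "stm_le Q (sg x) (sg y) \<and> stm_le Q (sg y) (sg z) \<longrightarrow> stm_le Q (sg x) (sg z)"
    using leQM[OF x y] leQM[OF y z] leQM[OF x z] le_trans[OF x y z] by auto
  show "stm_le Q (sg x) (sg y) \<longrightarrow> stm_le Q (stm_mult Q (sg x) (sg z)) (stm_mult Q (sg y) (sg z))"
    using leQM[OF x y] mulQ[OF M_C[OF x] M_C[OF z]] mulQ[OF M_C[OF y] M_C[OF z]]
      leQM[OF M_mul[OF x M_C[OF z]] M_mul[OF y M_C[OF z]]] le_mono[OF x y z] by auto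
qed

lemma nc_key: assumes x: "x \<in> C" and y: "y \<in> C" and z: "z \<in> C"
  and l: "lt (mul e y) (mul e z)" and q: "mul e (mul x y) = mul e (mul x z)"
  shows "(mul x z, mul e (mul x z)) \<in> E"
proof -
  have "mul (mul e y) x = mul e (mul z x)"
    using e_mul2[OF y x] comm[OF x y] comm[OF x z] q by simp
  then have "NC_product U (mul z x)"
    unfolding NC_product_def using z x eM[OF y] l by blast
  then have "mul x z \<in> D" using comm[OF x z] closed[OF z x] by (simp add: DD_def D0_def)
  moreover have "mul e (mul x z) \<in> D" using M_D eM closed[OF x z] by blast
  ultimately show ?thesis using closed[OF x z] closed[OF eC closed[OF x z]] ee_x[OF closed[OF x z]]
    by (simp add: E_iff)
qed

lemma Q_semiring: "stm_semiring Q"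
proof -
  interpret q: stmon Q by (rule stmon.intro[OF Q_sm])
  show ?thesis
  proof (rule q.semiring_if)
    fix X Y Z assume X: "X \<in> stm_carrier Q" and Y: "Y \<in> stm_carrier Q" and Z: "Z \<in> stm_carrier Q"
      and l: "stm_lt Q (stm_mult Q (stm_e Q) Y) (stm_mult Q (stm_e Q) Z)"
      and q: "stm_mult Q (stm_e Q) (stm_mult Q X Y) = stm_mult Q (stm_e Q) (stm_mult Q X Z)"
    obtain x y z where x: "x \<in> C" "X = sg x" and y: "y \<in> C" "Y = sg y" and z: "z \<in> C" "Z = sg z"
      using X Y Z carQ by auto
    have ey: "stm_mult Q (stm_e Q) Y = sg (mul e y)" using mulQ[OF eC y(1)] eQ y(2) by simp
    have ez': "stm_mult Q (stm_e Q) Z = sg (mul e z)" using mulQ[OF eC z(1)] eQ z(2) by simp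
    have l2: "lt (mul e y) (mul e z)"
    proof -
      have "stm_le Q (sg (mul e y)) (sg (mul e z))" "sg (mul e y) \<noteq> sg (mul e z)"
        using l ey ez' by (auto simp: stm_lt_def)
      then show ?thesis using leQM[OF eM[OF y(1)] eM[OF z(1)]] by (auto simp: stm_lt_def)
    qed
    have xy: "stm_mult Q X Y = sg (mul x y)" and xz: "stm_mult Q X Z = sg (mul x z)"
      using mulQ x y z by auto
    have "sg (mul e (mul x y)) = sg (mul e (mul x z))"
      using q xy xz eQ mulQ[OF eC closed[OF x(1) y(1)]] mulQ[OF eC closed[OF x(1) z(1)]] by simp
    then have q2: "mul e (mul x y) = mul e (mul x z)"
      using sg_inj_M eM closed x y z by blast
    have "sg (mul x z) = sg (mul e (mul x z))"
      using sg_eq closed[OF x(1) z(1)] closed[OF eC closed[OF x(1) z(1)]] nc_key[OF x(1) y(1) z(1) l2 q2]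
      by blast
    then show "stm_mult Q X Z = stm_mult Q (stm_e Q) (stm_mult Q X Z)"
      using xz eQ mulQ[OF eC closed[OF x(1) z(1)]] by simp
  qed
qed

lemma univ:
  fixes V :: "('b, 'n) stm_scheme" and \<alpha> :: "'a \<Rightarrow> 'b"
  assumes SV: "stm_semiring V" and fc: "fiber_contraction U V \<alpha>"
  shows "fiber_contraction Q V (\<lambda>X. \<alpha> (qrep X)) \<and> (\<forall>x\<in>C. \<alpha> x = \<alpha> (qrep (sg x)))"
proof -
  have smV: "supertropical_monoid V" using SV by (simp add: stm_semiring_def)
  interpret v: stmon V by (rule stmon.intro[OF smV])
  have distV: "\<And>a b c. a \<in> v.C \<Longrightarrow> b \<in> v.C \<Longrightarrow> c \<in> v.C \<Longrightarrow> v.mul a (v.add b c) = v.add (v.mul a b) (v.mul a c)"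
    using SV by (simp add: stm_semiring_def)
  have tr: "transmission U V \<alpha>" and surj: "\<alpha> ` C = v.C" and bij: "bij_betw \<alpha> M v.M"
    and ordi: "\<And>g h. g \<in> M \<Longrightarrow> h \<in> M \<Longrightarrow> v.le (\<alpha> g) (\<alpha> h) \<longleftrightarrow> le g h"
    using fc by (auto simp: fiber_contraction_def)
  have aC: "\<And>x. x \<in> C \<Longrightarrow> \<alpha> x \<in> v.C" and a0: "\<alpha> z0 = v.z0" and a1: "\<alpha> o1 = v.o1"
    and amul: "\<And>x y. x \<in> C \<Longrightarrow> y \<in> C \<Longrightarrow> \<alpha> (mul x y) = v.mul (\<alpha> x) (\<alpha> y)"
    and ae: "\<alpha> e = v.e"
    and ale: "\<And>g h. g \<in> M \<Longrightarrow> h \<in> M \<Longrightarrow> le g h \<Longrightarrow> v.le (\<alpha> g) (\<alpha> h)"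
    using tr unfolding transmission_def by blast+
  have injM: "inj_on \<alpha> M" and imM: "\<alpha> ` M = v.M" using bij by (auto simp: bij_betw_def)
  have aM: "\<And>g. g \<in> M \<Longrightarrow> \<alpha> g \<in> v.M" using imM by blast
  have ae_x: "\<And>x. x \<in> C \<Longrightarrow> \<alpha> (mul e x) = v.mul v.e (\<alpha> x)" using amul eC ae by simp
  have aD: "\<alpha> x = \<alpha> (mul e x)" if x: "x \<in> D" for x
  proof (cases "x \<in> M")
    case True then show ?thesis using M_iff by simp
  next
    case False
    then have "x \<in> D0 U" using x by (simp add: DD_def)
    then obtain y z y' where yz: "y \<in> C" "z \<in> C" "y' \<in> M" "x = mul y z" "lt y' (mul e y)"
      "mul y' z = mul e (mul y z)" by (auto simp: D0_def NC_product_def)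
    have y'C: "y' \<in> C" using M_C yz by blast
    have yzC: "mul y z \<in> C" using closed yz by blast
    define a b c where "a = \<alpha> y" and "b = \<alpha> z" and "c = \<alpha> y'"
    have abc: "a \<in> v.C" "b \<in> v.C" "c \<in> v.C" using aC yz y'C by (auto simp: a_def b_def c_def)
    have cM: "c \<in> v.M" using aM yz by (simp add: c_def)
    have ec: "v.mul v.e c = c" using cM v.M_iff by blast
    have eyM: "mul e y \<in> M" using eM yz by blast
    have "le y' (mul e y)" "y' \<noteq> mul e y" using yz(5) by (auto simp: stm_lt_def)
    then have "v.le c (\<alpha> (mul e y))" "c \<noteq> \<alpha> (mul e y)"
      using ale[OF yz(3) eyM] injM yz(3) eyM unfolding c_def inj_on_def by blast+
    then have "v.lt (v.mul v.e c) (v.mul v.e a)" using ec ae_x[OF yz(1)] by (simp add: a_def stm_lt_def)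
    then have ca: "v.add c a = a" using v.add_lt abc by blast
    have "v.mul b a = v.add (v.mul b c) (v.mul b a)" using distV[OF abc(2) abc(3) abc(1)] ca by simp
    moreover have bc: "v.mul b c = \<alpha> (mul e (mul y z))"
      using amul[OF yz(2) y'C] comm[OF yz(2) y'C] yz(6) by (simp add: b_def c_def)
    moreover have ba: "v.mul b a = \<alpha> (mul y z)"
      using amul[OF yz(2) yz(1)] comm[OF yz(2) yz(1)] by (simp add: b_def a_def)
    moreover have "v.mul v.e (\<alpha> (mul e (mul y z))) = v.mul v.e (\<alpha> (mul y z))"
      using ae_x[OF closed[OF eC yzC]] ae_x[OF yzC] ee_x[OF yzC] by simp
    ultimately have "\<alpha> (mul y z) = v.mul v.e (\<alpha> (mul e (mul y z)))"
      using v.add_eq by metis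
    also have "\<dots> = \<alpha> (mul e (mul y z))" using ae_x[OF closed[OF eC yzC]] ee_x[OF yzC] by simp
    finally show ?thesis using yz(4) by simp
  qed
  have aE: "\<alpha> x = \<alpha> y" if xy: "(x, y) \<in> E" for x y
  proof (cases "x = y")
    case False
    then have "x \<in> D" "y \<in> D" "mul e x = mul e y" using xy by (auto simp: E_iff)
    then show ?thesis using aD[of x] aD[of y] by simp
  qed simp
  have bq: "\<alpha> (qrep (sg x)) = \<alpha> x" if "x \<in> C" for x using aE qrep_E that by blast
  define \<beta> where "\<beta> = (\<lambda>X. \<alpha> (qrep X))"
  have bs: "\<beta> (sg x) = \<alpha> x" if "x \<in> C" for x using bq that by (simp add: \<beta>_def)
  have imgs: "\<beta> ` sg ` A = \<alpha> ` A" if "A \<subseteq> C" for A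
    using bs that by (force simp: image_iff)
  have "transmission Q V \<beta>"
    unfolding transmission_def carQ ghostsQ ball_sg oneQ zeroQ eQ
  proof (intro conjI ballI impI)
    fix x assume "x \<in> C" then show "\<beta> (sg x) \<in> v.C" using bs aC by simp
  next
    show "\<beta> (sg z0) = v.z0" using bs zero a0 by simp
    show "\<beta> (sg o1) = v.o1" using bs one a1 by simp
    show "\<beta> (sg e) = v.e" using bs eC ae by simp
  next
    fix x y assume x: "x \<in> C" and y: "y \<in> C"
    show "\<beta> (stm_mult Q (sg x) (sg y)) = v.mul (\<beta> (sg x)) (\<beta> (sg y))"
      using mulQ[OF x y] bs x y closed[OF x y] amul[OF x y] by simp
  next
    fix g h assume g: "g \<in> M" and h: "h \<in> M" and "stm_le Q (sg g) (sg h)"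
    then show "v.le (\<beta> (sg g)) (\<beta> (sg h))" using leQM ale bs M_C by simp
  qed
  moreover have "\<beta> ` stm_carrier Q = v.C" using imgs[of C] surj carQ by simp
  moreover have "bij_betw \<beta> (ghosts Q) v.M"
    unfolding bij_betw_def ghostsQ
  proof
    show "inj_on \<beta> (sg ` M)"
    proof (rule inj_onI)
      fix X Y assume "X \<in> sg ` M" "Y \<in> sg ` M" "\<beta> X = \<beta> Y"
      then obtain g h where "g \<in> M" "h \<in> M" "X = sg g" "Y = sg h" "\<alpha> g = \<alpha> h"
        using bs M_C by auto
      then show "X = Y" using injM by (auto simp: inj_on_def)
    qed
    have "M \<subseteq> C" using M_C by blast
    then show "\<beta> ` sg ` M = v.M" using imgs imM by simp
  qed
  moreover have "\<forall>X\<in>ghosts Q. \<forall>Y\<in>ghosts Q. v.le (\<beta> X) (\<beta> Y) \<longleftrightarrow> stm_le Q X Y"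
    unfolding ghostsQ ball_sg using bs M_C leQM ordi by simp
  ultimately have "fiber_contraction Q V \<beta>" by (simp add: fiber_contraction_def)
  then show ?thesis using bq by (simp add: \<beta>_def)
qed

end

theorem theorem4p5:
  fixes U :: "'a stm"
  assumes "supertropical_monoid U"
  shows "stm_semiring (quot U)
    \<and> (\<forall>(V :: 'b stm) \<alpha>. stm_semiring V \<and> fiber_contraction U V \<alpha> \<longrightarrow>
         (\<exists>\<beta>. fiber_contraction (quot U) V \<beta> \<and>
               (\<forall>x\<in>stm_carrier U. \<alpha> x = \<beta> (sigma U x)) \<and>
               (\<forall>\<beta>'. fiber_contraction (quot U) V \<beta>' \<and>
                      (\<forall>x\<in>stm_carrier U. \<alpha> x = \<beta>' (sigma U x)) \<longrightarrow>
                      (\<forall>X\<in>stm_carrier (quot U). \<beta>' X = \<beta> X))))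
    \<and> (\<forall>(V :: 'a stm) \<alpha>. stm_semiring V \<and> fiber_contraction_over U V \<alpha> \<longrightarrow>
         (\<exists>\<beta>. fiber_contraction (quot U) V \<beta> \<and>
               (\<forall>x\<in>stm_carrier U. \<alpha> x = \<beta> (sigma U x)) \<and>
               (\<forall>y\<in>ghosts U. \<beta> (sigma U y) = y)))"
proof -
  interpret u: stmon U by (rule stmon.intro[OF assms])
  show ?thesis
  proof (intro conjI allI impI)
    show "stm_semiring (quot U)" by (rule u.Q_semiring)
  next
    fix V :: "'b stm" and \<alpha> :: "'a \<Rightarrow> 'b"
    assume a: "stm_semiring V \<and> fiber_contraction U V \<alpha>"
    then have f: "fiber_contraction (quot U) V (\<lambda>X. \<alpha> (qrep X))"
      and g: "\<forall>x\<in>stm_carrier U. \<alpha> x = \<alpha> (qrep (sigma U x))"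
      using u.univ by blast+
    have uq: "\<forall>X\<in>stm_carrier (quot U). \<beta>' X = \<alpha> (qrep X)"
      if "\<forall>x\<in>stm_carrier U. \<alpha> x = \<beta>' (sigma U x)" for \<beta>'
      using that g u.carQ by auto
    show "\<exists>\<beta>. fiber_contraction (quot U) V \<beta> \<and>
               (\<forall>x\<in>stm_carrier U. \<alpha> x = \<beta> (sigma U x)) \<and>
               (\<forall>\<beta>'. fiber_contraction (quot U) V \<beta>' \<and>
                      (\<forall>x\<in>stm_carrier U. \<alpha> x = \<beta>' (sigma U x)) \<longrightarrow>
                      (\<forall>X\<in>stm_carrier (quot U). \<beta>' X = \<beta> X))"
      using f g uq by blast
  next
    fix V :: "'a stm" and \<alpha> :: "'a \<Rightarrow> 'a"
    assume a: "stm_semiring V \<and> fiber_contraction_over U V \<alpha>"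
    then have a2: "stm_semiring V \<and> fiber_contraction U V \<alpha>" and idm: "\<forall>x\<in>ghosts U. \<alpha> x = x"
      by (auto simp: fiber_contraction_over_def)
    then have f: "fiber_contraction (quot U) V (\<lambda>X. \<alpha> (qrep X))"
      and g: "\<forall>x\<in>stm_carrier U. \<alpha> x = \<alpha> (qrep (sigma U x))"
      using u.univ by blast+
    have "\<forall>y\<in>ghosts U. \<alpha> (qrep (sigma U y)) = y" using g idm u.M_C by metis
    then show "\<exists>\<beta>. fiber_contraction (quot U) V \<beta> \<and>
               (\<forall>x\<in>stm_carrier U. \<alpha> x = \<beta> (sigma U x)) \<and>
               (\<forall>y\<in>ghosts U. \<beta> (sigma U y) = y)"
      using f g by blast
  qed
qed

end
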